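(* Consider the iterates of SAS-ADMM (defined in the context) and fix an outer index $k\ge 0$ with $\eta_k\in(0,1/\nu)$. Then for every $w=(x;y;\lambda)\in\Omega$, $$F(w)-F(\tilde w^k)+\langle w-\tilde w^k,\mathcal J(w)\rangle\;\ge\;(w-\tilde w^k)^\top Q_k\,(w^k-\tilde w^k)+\zeta^k(x),$$ where $$Q_k=\begin{bmatrix}\mathcal D_k&0&0\\0&L+\beta B^\top B&-\tau B^\top\\0&-B&\frac1\beta I\end{bmatrix}.$$ (The inequality holds for every realization of the random quantities.)
   Context: Setting. $\mathcal X\subset\mathbb R^{n_1}$, $\mathcal Y\subset\mathbb R^{n_2}$ are nonempty closed convex sets; $A\in\mathbb R^{n\times n_1}$, $B\in\mathbb R^{n\times n_2}$, $b\in\mathbb R^n$; $g:\mathcal Y\to\mathbb R\cup\{+\infty\}$ is proper convex; $f=\frac1N\sum_{j=1}^N f_j$, each $f_j$ real-valued, convex and continuously differentiable on an open set containing $\mathcal X$. The problem is $\min\{f(x)+g(y): x\in\mathcal X,\ y\in\mathcal Y,\ Ax+By=b\}$. A fixed symmetric positive definite $H\in\mathbb R^{n_1\times n_1}$ and a constant $\nu>0$ satisfy $\|\nabla f_j(x_1)-\nabla f_j(x_2)\|_{H^{-1}}\le \nu\|x_1-x_2\|_H$ for all $x_1,x_2\in\mathcal X$ and all $j$. For a symmetric matrix $G$, $\|v\|_G^2:=v^\top G v$ (also when $G$ is indefinite); $G_1\succeq G_2$ means $G_1-G_2$ is positive semidefinite. $\mathcal L_\beta(x,y,\lambda)=f(x)+g(y)-\lambda^\top(Ax+By-b)+\frac\beta2\|Ax+By-b\|^2$.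 $\Delta:=\{(\tau,s)\in\mathbb R^2:\ \tau+s>0,\ \tau\le1,\ -\tau^2-s^2-\tau s+\tau+s+1\ge0\}$. Subroutine xsub. Inputs: $x^k\in\mathcal X$, $\breve x^k$, $h\in\mathbb R^{n_1}$, an integer $m_k\ge1$, $\eta_k>0$, a symmetric matrix $M_k$. Set $x_1=x^k$, $\breve x_1=\breve x^k$. For $t=1,\dots,m_k$: draw $\xi_t$ uniformly from $\{1,\dots,N\}$, independently of everything generated before; set $\beta_t=2/(t+1)$, $\gamma_t=2/(t\eta_k)$, $\hat x_t=\beta_t\breve x_t+(1-\beta_t)x_t$, $d_t=\nabla f_{\xi_t}(\hat x_t)+e_t$ where $e_t$ is a random vector whose conditional expectation given all previously generated random quantities and $\xi_t$ is $0$; $\breve x_{t+1}=\arg\min_{x\in\mathcal X}\{\langle d_t+h,x\rangle+\frac{\gamma_t}2\|x-\breve x_t\|_H^2+\frac12\|x-x^k\|_{M_k}^2\}$; $x_{t+1}=\beta_t\breve x_{t+1}+(1-\beta_t)x_t$. Output $x^{k+1}=x_{m_k+1}$, $\breve x^{k+1}=\breve x_{m_k+1}$. Put $\delta_t=\nabla f(\hat x_t)-d_t$ (inner quantities of outer iteration $k$), and for $x\in\mathcal X$ $$\zeta^k(x)=\frac{2}{m_k(m_k+1)}\Big[\frac1{\eta_k}\big(\|x-\breve x^{k+1}\|_H^2-\|x-\breve x^k\|_H^2\big)-\sum_{t=1}^{m_k}t\langle\delta_t,\breve x_t-x\rangle-\frac{\eta_k}{4(1-\eta_k\nu)}\sum_{t=1}^{m_k}t^2\|\delta_t\|_{H^{-1}}^2\Big].$$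 Algorithm SAS-ADMM. Parameters: $\beta>0$, the matrix $H$, a symmetric positive semidefinite $L\in\mathbb R^{n_2\times n_2}$, $(\tau,s)\in\Delta$. Start: $(x^0,y^0,\lambda^0)\in\mathcal X\times\mathcal Y\times\mathbb R^n$, $\breve x^0=x^0$. For $k=0,1,\dots$: choose an integer $m_k\ge1$, $\eta_k>0$, and a symmetric $M_k$ with $\mathcal D_k:=M_k-\beta A^\top A\succeq0$; set $h^k=-A^\top[\lambda^k-\beta(Ax^k+By^k-b)]$; compute $(x^{k+1},\breve x^{k+1})$ by xsub with inputs $x^k,\breve x^k,h^k,m_k,\eta_k,M_k$; $\lambda^{k+1/2}=\lambda^k-\tau\beta(Ax^{k+1}+By^k-b)$; $y^{k+1}\in\arg\min_{y\in\mathcal Y}\mathcal L_\beta(x^{k+1},y,\lambda^{k+1/2})+\frac12\|y-y^k\|_L^2$ (a minimizer is assumed to exist); $\lambda^{k+1}=\lambda^{k+1/2}-s\beta(Ax^{k+1}+By^{k+1}-b)$. Notation. $\Omega=\mathcal X\times\mathcal Y\times\mathbb R^n$; $w=(x;y;\lambda)$; $F(w)=f(x)+g(y)$; $\mathcal J(w)=(-A^\top\lambda;\,-B^\top\lambda;\,Ax+By-b)$; $w^k=(x^k;y^k;\lambda^k)$; $\tilde\lambda^k=\lambda^k-\beta(Ax^{k+1}+By^k-b)$; $\tilde w^k=(x^{k+1};y^{k+1};\tilde\lambda^k)$. *)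

theory Defs
  imports "HOL-Analysis.Analysis" "HOL-Library.Extended_Real"
begin

text \<open>Quadratic form / squared G-norm: qn G v = v' G v (also for indefinite G).\<close>
definition qn :: "real^'n^'n \<Rightarrow> real^'n \<Rightarrow> real" where
  "qn G v = v \<bullet> (G *v v)"

definition sym_mat :: "real^'n^'n \<Rightarrow> bool" where
  "sym_mat G \<longleftrightarrow> transpose G = G"

definition psd_mat :: "real^'n^'n \<Rightarrow> bool" where
  "psd_mat G \<longleftrightarrow> sym_mat G \<and> (\<forall>v. 0 \<le> qn G v)"

definition pd_mat :: "real^'n^'n \<Rightarrow> bool" where
  "pd_mat G \<longleftrightarrow> sym_mat G \<and> (\<forall>v. v \<noteq> 0 \<longrightarrow> 0 < qn G v)"

definition convex_ereal_on :: "'a::real_vector set \<Rightarrow> ('a \<Rightarrow> ereal) \<Rightarrow> bool" where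
  "convex_ereal_on S g \<longleftrightarrow> (\<forall>u\<in>S. \<forall>v\<in>S. \<forall>t::real. 0 \<le> t \<and> t \<le> 1 \<longrightarrow>
      g ((1 - t) *\<^sub>R u + t *\<^sub>R v) \<le> ereal (1 - t) * g u + ereal t * g v)"

definition proper_convex_on :: "'a::real_vector set \<Rightarrow> ('a \<Rightarrow> ereal) \<Rightarrow> bool" where
  "proper_convex_on S g \<longleftrightarrow> convex_ereal_on S g \<and> (\<forall>y\<in>S. g y \<noteq> -\<infinity>) \<and> (\<exists>y\<in>S. g y \<noteq> \<infinity>)"

definition Delta_region :: "(real \<times> real) set" where
  "Delta_region = {(a, c). a + c > 0 \<and> a \<le> 1 \<and> - (a^2) - c^2 - a * c + a + c + 1 \<ge> (0::real)}"

definition aug_lag ::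
  "(real^'a \<Rightarrow> real) \<Rightarrow> (real^'b \<Rightarrow> ereal) \<Rightarrow> real^'a^'c \<Rightarrow> real^'b^'c \<Rightarrow> real^'c \<Rightarrow> real
     \<Rightarrow> real^'a \<Rightarrow> real^'b \<Rightarrow> real^'c \<Rightarrow> ereal" where
  "aug_lag f g A B b \<beta> x y lam =
     ereal (f x) + g y + ereal (- (lam \<bullet> (A *v x + B *v y - b)) + \<beta> / 2 * (norm (A *v x + B *v y - b))^2)"

text \<open>The error term zeta^k(x) of outer iteration k, given the inner quantities
  delta_t, breve-x_t (t = 1..m), breve-x^k, breve-x^{k+1}.\<close>
definition zeta ::
  "real^'a^'a \<Rightarrow> real \<Rightarrow> real \<Rightarrow> nat \<Rightarrow> (nat \<Rightarrow> real^'a) \<Rightarrow> (nat \<Rightarrow> real^'a)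
     \<Rightarrow> real^'a \<Rightarrow> real^'a \<Rightarrow> real^'a \<Rightarrow> real" where
  "zeta H \<nu> \<eta> m \<delta> xbt xbk xbk1 x =
     2 / (real m * (real m + 1)) *
       ( 1 / \<eta> * (qn H (x - xbk1) - qn H (x - xbk))
         - (\<Sum>t = 1..m. real t * (\<delta> t \<bullet> (xbt t - x)))
         - \<eta> / (4 * (1 - \<eta> * \<nu>)) * (\<Sum>t = 1..m. (real t)^2 * qn (matrix_inv H) (\<delta> t)))"

end

theory Submission
  imports Defs
begin


lemma inner_mat_transpose: "(u::real^'n) \<bullet> (A *v v) = (transpose A *v u) \<bullet> (v::real^'m)"
  by (metis dot_lmul_matrix inner_commute transpose_matrix_vector)

lemma sym_inner: "sym_mat S \<Longrightarrow> (u::real^'n) \<bullet> (S *v v) = v \<bullet> (S *v u)"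
  unfolding sym_mat_def by (metis inner_mat_transpose inner_commute)

lemma qn_add: "sym_mat S \<Longrightarrow> qn S (u + v) = qn S u + 2 * (u \<bullet> (S *v v)) + qn S v"
  unfolding qn_def using sym_inner[of S u v]
  by (simp add: algebra_simps inner_add_left inner_add_right)

lemma mv_neg: "A *v (- x) = - (A *v (x::real^'n))"
  by (metis matrix_vector_mult_diff_distrib diff_0 matrix_vector_mult_0_right)

lemma qn_scale: "qn S (c *\<^sub>R u) = c^2 * qn S u"
  unfolding qn_def by (simp add: algebra_simps power2_eq_square)

lemma qn_diff: "sym_mat S \<Longrightarrow> qn S (u - v) = qn S u - 2 * (u \<bullet> (S *v v)) + qn S v"
  using qn_add[of S u "-v"] qn_scale[of S "-1" v] by (simp add: algebra_simps mv_neg)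

lemma qn_neg: "qn S (- u) = qn S u"
  unfolding qn_def by (simp add: mv_neg)

lemma qn_comm: "qn S (u - v) = qn S (v - u)"
  using qn_neg[of S "u - v"] by simp

lemma pd_invertible:
  assumes "pd_mat (H::real^'n^'n)" shows "invertible H"
proof -
  have "\<forall>x. H *v x = 0 \<longrightarrow> x = 0"
    using assms unfolding pd_mat_def qn_def by (metis inner_zero_right less_irrefl)
  then show ?thesis
    using invertible_left_inverse matrix_left_invertible_ker by blast
qed

lemma pd_inv_right:
  assumes "pd_mat (H::real^'n^'n)" shows "H *v (matrix_inv H *v w) = w"
proof -
  have "H ** matrix_inv H = mat 1"
    using pd_invertible[OF assms] unfolding invertible_def matrix_inv_def
    by (metis (mono_tags, lifting) someI_ex)
  then show ?thesis by (simp add: matrix_vector_mul_assoc)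
qed

lemma qn_inv: "pd_mat (H::real^'n^'n) \<Longrightarrow> qn (matrix_inv H) w = qn H (matrix_inv H *v w)"
  unfolding qn_def by (simp add: pd_inv_right inner_commute)

lemma qn_inv_nonneg: "pd_mat (H::real^'n^'n) \<Longrightarrow> 0 \<le> qn (matrix_inv H) w"
  using qn_inv[of H w] unfolding pd_mat_def
  by (metis order.order_iff_strict qn_def inner_zero_left)

lemma young_H:
  assumes H: "pd_mat (H::real^'n^'n)" and c: "c > 0"
  shows "w \<bullet> u \<le> qn (matrix_inv H) w / (4*c) + c * qn H u"
proof -
  have sH: "sym_mat H" using H pd_mat_def by blast
  let ?z = "matrix_inv H *v w"
  have "0 \<le> qn H ((2*c) *\<^sub>R u - ?z)"
    using H unfolding pd_mat_def by (metis order.order_iff_strict qn_def inner_zero_left)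
  also have "\<dots> = 4*c^2 * qn H u - 4*c * (w \<bullet> u) + qn (matrix_inv H) w"
    using qn_diff[OF sH, of "(2*c) *\<^sub>R u" ?z] qn_scale[of H "2*c" u] qn_inv[OF H, of w]
    by (simp add: pd_inv_right[OF H] power2_eq_square inner_commute algebra_simps)
  finally have "4*c * (w \<bullet> u) \<le> 4*c^2 * qn H u + qn (matrix_inv H) w" by simp
  then show ?thesis using c by (simp add: field_simps power2_eq_square)
qed

lemma cs_H:
  assumes H: "pd_mat (H::real^'n^'n)"
  shows "w \<bullet> u \<le> sqrt (qn (matrix_inv H) w) * sqrt (qn H u)"
proof -
  let ?P = "qn (matrix_inv H) w" and ?Q = "qn H u"
  have P0: "?P \<ge> 0" by (rule qn_inv_nonneg[OF H])
  have Q0: "?Q \<ge> 0" using H unfolding pd_mat_def by (metis order.order_iff_strict qn_def inner_zero_left)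
  show ?thesis
  proof (cases "?P = 0 \<or> ?Q = 0")
    case True
    then show ?thesis
    proof
      assume "?P = 0"
      then have "matrix_inv H *v w = 0" using qn_inv[OF H, of w] H unfolding pd_mat_def
        by (metis less_irrefl)
      then have "w = 0" by (metis pd_inv_right[OF H] matrix_vector_mult_0_right)
      then show ?thesis using P0 Q0 by simp
    next
      assume "?Q = 0"
      then have "u = 0" using H unfolding pd_mat_def by (metis less_irrefl)
      then show ?thesis using P0 Q0 by simp
    qed
  next
    case False
    then have Pp: "?P > 0" and Qp: "?Q > 0" using P0 Q0 by auto
    define c where "c = sqrt ?P / (2 * sqrt ?Q)"
    have c: "c > 0" using Pp Qp by (simp add: c_def)
    have sP: "sqrt ?P * sqrt ?P = ?P" using P0 by simp
    have sQ: "sqrt ?Q * sqrt ?Q = ?Q" using Q0 by simp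
    have "w \<bullet> u \<le> ?P / (4*c) + c * ?Q" by (rule young_H[OF H c])
    also have "?P / (4*c) = sqrt ?P * sqrt ?Q / 2"
      using Pp Qp sP sQ by (simp add: c_def field_simps)
    also have "c * ?Q = sqrt ?P * sqrt ?Q / 2"
      using Pp Qp sP sQ by (simp add: c_def field_simps)
    finally show ?thesis by (simp add: mult.commute)
  qed
qed


definition Ef :: "(real^'n \<Rightarrow> real) \<Rightarrow> real^'n \<Rightarrow> real^'n^'n \<Rightarrow> real^'n \<Rightarrow> real^'n \<Rightarrow> real^'n \<Rightarrow> real" where
  "Ef f h M xo z w = f w - f z + h \<bullet> (w - z) + (w - z) \<bullet> (M *v (w - xo))"

lemma L_convex_id:
  assumes sM: "sym_mat M"
  shows "h \<bullet> (((1-b) *\<^sub>R a + b *\<^sub>R q) - z) + (((1-b) *\<^sub>R a + b *\<^sub>R q) - z) \<bullet> (M *v (((1-b) *\<^sub>R a + b *\<^sub>R q) - xo))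
   = (1-b) * (h \<bullet> (a - z) + (a - z) \<bullet> (M *v (a - xo))) + b * (h \<bullet> (q - z) + (q - z) \<bullet> (M *v (q - xo)))
     - b * (1-b) * qn M (a - q)"
proof -
  define u where "u = a - z"
  define v where "v = q - z"
  define r where "r = z - xo"
  have e1: "((1-b) *\<^sub>R a + b *\<^sub>R q) - z = (1-b) *\<^sub>R u + b *\<^sub>R v" by (simp add: u_def v_def algebra_simps)
  have e2: "((1-b) *\<^sub>R a + b *\<^sub>R q) - xo = ((1-b) *\<^sub>R u + b *\<^sub>R v) + r" by (simp add: u_def v_def r_def algebra_simps)
  have e3: "a - xo = u + r" "q - xo = v + r" "a - q = u - v" "a - z = u" "q - z = v" by (auto simp: u_def v_def r_def)
  have s: "v \<bullet> (M *v u) = u \<bullet> (M *v v)" using sym_inner[OF sM] by metis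
  show ?thesis unfolding e1 e2 e3 qn_def
    by (simp add: algebra_simps inner_add_left inner_add_right inner_diff_left inner_diff_right s power2_eq_square)
qed

lemma H_three_point:
  assumes sH: "sym_mat H"
  shows "(H *v (q - p)) \<bullet> (z - q) = (qn H (z - p) - qn H (z - q) - qn H (q - p)) / 2"
proof -
  have "z - p = (z - q) + (q - p)" by simp
  then have "qn H (z - p) = qn H (z - q) + 2 * ((z - q) \<bullet> (H *v (q - p))) + qn H (q - p)"
    using qn_add[OF sH, of "z - q" "q - p"] by simp
  then show ?thesis by (simp add: inner_commute)
qed


lemma one_step:
  fixes a p q z xo g d h :: "real^'n"
  assumes H: "pd_mat H" and sM: "sym_mat M" and Mpsd: "\<forall>v. 0 \<le> qn M v"
    and b: "0 < b" "b \<le> 1" and gam: "\<gamma> - \<nu> * b > 0"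
    and xh: "xh = b *\<^sub>R p + (1-b) *\<^sub>R a" and a1: "a1 = b *\<^sub>R q + (1-b) *\<^sub>R a"
    and desc: "f a1 \<le> f xh + g \<bullet> (a1 - xh) + \<nu> / 2 * qn H (a1 - xh)"
    and cvx1: "f xh + g \<bullet> (a - xh) \<le> f a" and cvx2: "f xh + g \<bullet> (z - xh) \<le> f z"
    and vi: "0 \<le> (d + h + \<gamma> *\<^sub>R (H *v (q - p)) + M *v (q - xo)) \<bullet> (z - q)"
  shows "Ef f h M xo z a1 \<le> (1-b) * Ef f h M xo z a
     + b * ((g - d) \<bullet> (p - z) + \<gamma> / 2 * (qn H (z - p) - qn H (z - q))
            + qn (matrix_inv H) (g - d) / (2 * (\<gamma> - \<nu> * b)))"
proof -
  have sH: "sym_mat H" using H pd_mat_def by blast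
  have d1: "a1 - xh = b *\<^sub>R (q - p)" by (simp add: xh a1 algebra_simps)
  have d2: "g \<bullet> (a1 - xh) = (1-b) * (g \<bullet> (a - xh)) + b * (g \<bullet> (z - xh)) + b * (g \<bullet> (q - z))"
    by (simp add: a1 inner_diff_right inner_add_right algebra_simps)
  have A: "f a1 - f z \<le> (1-b) * (f a - f z) + b * (g \<bullet> (q - z)) + \<nu> * b^2 / 2 * qn H (q - p)"
  proof -
    have "f a1 \<le> (1-b) * (f xh + g \<bullet> (a - xh)) + b * (f xh + g \<bullet> (z - xh)) + b * (g \<bullet> (q - z))
                 + \<nu> / 2 * (b^2 * qn H (q - p))"
      using desc unfolding d1 qn_scale using d2 d1 by (simp add: algebra_simps)
    also have "\<dots> \<le> (1-b) * f a + b * f z + b * (g \<bullet> (q - z)) + \<nu> / 2 * (b^2 * qn H (q - p))"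
    proof -
      have "(1-b) * (f xh + g \<bullet> (a - xh)) \<le> (1-b) * f a" using cvx1 b by (intro mult_left_mono) auto
      moreover have "b * (f xh + g \<bullet> (z - xh)) \<le> b * f z" using cvx2 b by (intro mult_left_mono) auto
      ultimately show ?thesis by linarith
    qed
    finally show ?thesis by (simp add: algebra_simps)
  qed
  have a1': "a1 = (1-b) *\<^sub>R a + b *\<^sub>R q" using a1 by simp
  have B: "h \<bullet> (a1 - z) + (a1 - z) \<bullet> (M *v (a1 - xo))
      \<le> (1-b) * (h \<bullet> (a - z) + (a - z) \<bullet> (M *v (a - xo))) + b * (h \<bullet> (q - z) + (q - z) \<bullet> (M *v (q - xo)))"
    unfolding a1' L_convex_id[OF sM] using Mpsd b by (simp add: mult_nonneg_nonneg)
  have C: "d \<bullet> (q - z) + (h \<bullet> (q - z) + (q - z) \<bullet> (M *v (q - xo)))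
      \<le> \<gamma> / 2 * (qn H (z - p) - qn H (z - q) - qn H (q - p))"
  proof -
    have "0 \<le> d \<bullet> (z - q) + h \<bullet> (z - q) + \<gamma> * ((H *v (q - p)) \<bullet> (z - q)) + (M *v (q - xo)) \<bullet> (z - q)"
      using vi by (simp add: inner_add_left)
    moreover have "(H *v (q - p)) \<bullet> (z - q) = (qn H (z - p) - qn H (z - q) - qn H (q - p)) / 2"
      by (rule H_three_point[OF sH])
    moreover have "d \<bullet> (z - q) = - (d \<bullet> (q - z))" "h \<bullet> (z - q) = - (h \<bullet> (q - z))"
      "(M *v (q - xo)) \<bullet> (z - q) = - ((q - z) \<bullet> (M *v (q - xo)))"
      by (simp_all add: inner_diff_right inner_diff_left inner_commute)
    ultimately show ?thesis by simp
  qed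
  define c where "c = (\<gamma> - \<nu> * b) / 2"
  have c: "c > 0" using gam by (simp add: c_def)
  have Y: "(g - d) \<bullet> (q - p) \<le> qn (matrix_inv H) (g - d) / (4*c) + c * qn H (q - p)"
    by (rule young_H[OF H c])
  have gd: "g \<bullet> (q - z) = (g - d) \<bullet> (p - z) + (g - d) \<bullet> (q - p) + d \<bullet> (q - z)"
    by (simp add: inner_diff_left inner_diff_right algebra_simps)
  have "Ef f h M xo z a1 \<le> (1-b) * Ef f h M xo z a + b * (g \<bullet> (q - z) + (h \<bullet> (q - z) + (q - z) \<bullet> (M *v (q - xo))))
        + \<nu> * b^2 / 2 * qn H (q - p)"
    using A B unfolding Ef_def by (simp add: algebra_simps)
  also have "\<dots> \<le> (1-b) * Ef f h M xo z a + b * ((g - d) \<bullet> (p - z) + (g - d) \<bullet> (q - p)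
        + \<gamma> / 2 * (qn H (z - p) - qn H (z - q) - qn H (q - p))) + \<nu> * b^2 / 2 * qn H (q - p)"
    unfolding gd using mult_left_mono[OF C, of b] b by (simp add: algebra_simps)
  also have "\<dots> \<le> (1-b) * Ef f h M xo z a + b * ((g - d) \<bullet> (p - z) + (qn (matrix_inv H) (g - d) / (4*c) + c * qn H (q - p))
        + \<gamma> / 2 * (qn H (z - p) - qn H (z - q) - qn H (q - p))) + \<nu> * b^2 / 2 * qn H (q - p)"
    using mult_left_mono[OF Y, of b] b by (simp add: algebra_simps)
  also have "\<dots> = (1-b) * Ef f h M xo z a
     + b * ((g - d) \<bullet> (p - z) + \<gamma> / 2 * (qn H (z - p) - qn H (z - q))
            + qn (matrix_inv H) (g - d) / (2 * (\<gamma> - \<nu> * b)))"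
    using c by (simp add: c_def field_simps power2_eq_square)
  finally show ?thesis .
qed


lemma coef_bound:
  fixes t :: nat and \<eta> \<nu> :: real
  assumes t: "t \<ge> 1" and eta: "\<eta> > 0" and nu: "\<nu> > 0" and en: "\<eta> * \<nu> < 1"
  shows "2 / (real t * \<eta>) - \<nu> * (2 / (real t + 1)) > 0"
    and "real t / (2 * (2 / (real t * \<eta>) - \<nu> * (2 / (real t + 1)))) \<le> \<eta> / (4 * (1 - \<eta> * \<nu>)) * (real t)^2"
proof -
  have tp: "real t > 0" using t by simp
  have k1: "2 / (real t * \<eta>) - \<nu> * (2 / (real t + 1)) \<ge> 2 * (1 - \<eta> * \<nu>) / (real t * \<eta>)"
  proof -
    have "\<nu> * (2 / (real t + 1)) \<le> \<nu> * (2 / real t)"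
      using tp nu by (intro mult_left_mono divide_left_mono) auto
    also have "\<nu> * (2 / real t) = 2 * (\<eta> * \<nu>) / (real t * \<eta>)" using eta tp by (simp add: field_simps)
    finally show ?thesis by (simp add: diff_divide_distrib)
  qed
  have k0: "2 * (1 - \<eta> * \<nu>) / (real t * \<eta>) > 0" using en eta tp by simp
  show "2 / (real t * \<eta>) - \<nu> * (2 / (real t + 1)) > 0" using k1 k0 by linarith
  define X where "X = 2 / (real t * \<eta>) - \<nu> * (2 / (real t + 1))"
  define Y where "Y = 2 * (1 - \<eta> * \<nu>) / (real t * \<eta>)"
  have "real t / (2 * X) \<le> real t / (2 * Y)"
    using k0 k1 tp unfolding X_def[symmetric] Y_def[symmetric] by (intro frac_le) auto
  also have "\<dots> = \<eta> / (4 * (1 - \<eta> * \<nu>)) * (real t)^2"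
    using en eta tp by (simp add: Y_def field_simps power2_eq_square)
  finally show "real t / (2 * (2 / (real t * \<eta>) - \<nu> * (2 / (real t + 1)))) \<le> \<eta> / (4 * (1 - \<eta> * \<nu>)) * (real t)^2"
    unfolding X_def .
qed

lemma telescope:
  fixes E R Q P :: "nat \<Rightarrow> real" and \<eta> \<nu> :: real
  assumes eta: "\<eta> > 0" and nu: "\<nu> > 0" and en: "\<eta> * \<nu> < 1"
    and P0: "\<forall>t. 0 \<le> P t"
    and step: "\<forall>t\<in>{1..m}. E (t+1) \<le> (1 - 2 / (real t + 1)) * E t
        + 2 / (real t + 1) * (R t + (2 / (real t * \<eta>)) / 2 * (Q t - Q (t+1))
           + P t / (2 * (2 / (real t * \<eta>) - \<nu> * (2 / (real t + 1)))))"
  shows "real m * (real m + 1) / 2 * E (m+1) \<le> 1 / \<eta> * (Q 1 - Q (m+1)) + (\<Sum>t = 1..m. real t * R t)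
          + \<eta> / (4 * (1 - \<eta> * \<nu>)) * (\<Sum>t = 1..m. (real t)^2 * P t)"
  using step
proof (induction m)
  case 0
  then show ?case by simp
next
  case (Suc n)
  let ?t = "Suc n"
  have IH: "real n * (real n + 1) / 2 * E (n+1) \<le> 1 / \<eta> * (Q 1 - Q (n+1)) + (\<Sum>t = 1..n. real t * R t)
          + \<eta> / (4 * (1 - \<eta> * \<nu>)) * (\<Sum>t = 1..n. (real t)^2 * P t)"
    using Suc by auto
  have st: "E (?t+1) \<le> (1 - 2 / (real ?t + 1)) * E ?t
        + 2 / (real ?t + 1) * (R ?t + (2 / (real ?t * \<eta>)) / 2 * (Q ?t - Q (?t+1))
           + P ?t / (2 * (2 / (real ?t * \<eta>) - \<nu> * (2 / (real ?t + 1)))))"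
    by (rule bspec[OF Suc.prems]) simp
  have cb: "real ?t / (2 * (2 / (real ?t * \<eta>) - \<nu> * (2 / (real ?t + 1)))) \<le> \<eta> / (4 * (1 - \<eta> * \<nu>)) * (real ?t)^2"
    using coef_bound[of ?t \<eta> \<nu>] eta nu en by auto
  define X where "X = 2 / (real ?t * \<eta>) - \<nu> * (2 / (real ?t + 1))"
  have Xp: "X > 0" using coef_bound[of ?t \<eta> \<nu>] eta nu en unfolding X_def by auto
  note st = st[unfolded X_def[symmetric]]
  note cb = cb[unfolded X_def[symmetric]]
  define G where "G = real ?t * (real ?t + 1) / 2"
  have Gp: "G > 0" by (simp add: G_def)
  have "G * E (?t+1) \<le> G * ((1 - 2 / (real ?t + 1)) * E ?t
        + 2 / (real ?t + 1) * (R ?t + (2 / (real ?t * \<eta>)) / 2 * (Q ?t - Q (?t+1))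
           + P ?t / (2 * X)))"
    using st Gp by (intro mult_left_mono) auto
  also have "\<dots> = real n * (real n + 1) / 2 * E (n+1) + real ?t * R ?t + 1/\<eta> * (Q ?t - Q (?t+1))
       + real ?t / (2 * X) * P ?t"
  proof -
    have r: "\<And>G A E B R C D W::real. G * (A*E + B*(R + C*D + W)) = (G*A)*E + (G*B)*R + ((G*B)*C)*D + (G*B)*W"
      by (simp add: algebra_simps)
    have c1: "G * (1 - 2/(real ?t+1)) = real n*(real n+1)/2" by (simp add: G_def field_simps)
    have c2: "G * (2/(real ?t+1)) = real ?t" by (simp add: G_def field_simps)
    have c3: "real ?t * ((2/(real ?t*\<eta>))/2) = 1/\<eta>" proof -
      have "real ?t \<noteq> 0" by simp
      then show ?thesis using eta by (simp add: field_simps del: of_nat_Suc)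
    qed
    have c4: "real ?t * (P ?t / (2 * X)) = real ?t / (2 * X) * P ?t" by simp
    show ?thesis unfolding r c1 c2 c3 c4 by simp
  qed
  also have "\<dots> \<le> real n * (real n + 1) / 2 * E (n+1) + real ?t * R ?t + 1/\<eta> * (Q ?t - Q (?t+1))
       + \<eta> / (4 * (1 - \<eta> * \<nu>)) * (real ?t)^2 * P ?t"
    using cb P0 by (intro add_left_mono mult_right_mono) auto
  finally have "G * E (?t+1) \<le> \<dots>" .
  then show ?case using IH unfolding G_def by (simp add: algebra_simps)
qed


lemma xsub_bound:
  fixes xin xbin \<delta> :: "nat \<Rightarrow> real^'n"
  assumes H: "pd_mat H" and eta: "\<eta> > 0" and nu: "\<nu> > 0" and en: "\<eta> * \<nu> < 1" and m: "m \<ge> 1"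
    and step: "\<forall>t\<in>{1..m}. Ef f h M xo z (xin (t+1)) \<le> (1 - 2 / (real t + 1)) * Ef f h M xo z (xin t)
        + 2 / (real t + 1) * (\<delta> t \<bullet> (xbin t - z) + (2 / (real t * \<eta>)) / 2 * (qn H (z - xbin t) - qn H (z - xbin (t+1)))
           + qn (matrix_inv H) (\<delta> t) / (2 * (2 / (real t * \<eta>) - \<nu> * (2 / (real t + 1)))))"
  shows "zeta H \<nu> \<eta> m \<delta> xbin (xbin 1) (xbin (m+1)) z \<le> - Ef f h M xo z (xin (m+1))"
proof -
  let ?E = "\<lambda>t. Ef f h M xo z (xin t)"
  let ?Q = "\<lambda>t. qn H (z - xbin t)"
  let ?R = "\<lambda>t. \<delta> t \<bullet> (xbin t - z)"
  let ?P = "\<lambda>t. qn (matrix_inv H) (\<delta> t)"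
  have T: "real m * (real m + 1) / 2 * ?E (m+1) \<le> 1 / \<eta> * (?Q 1 - ?Q (m+1)) + (\<Sum>t = 1..m. real t * ?R t)
          + \<eta> / (4 * (1 - \<eta> * \<nu>)) * (\<Sum>t = 1..m. (real t)^2 * ?P t)"
    by (rule telescope[OF eta nu en _ step]) (simp add: qn_inv_nonneg[OF H])
  define S where "S = 1 / \<eta> * (?Q 1 - ?Q (m+1)) + (\<Sum>t = 1..m. real t * ?R t)
          + \<eta> / (4 * (1 - \<eta> * \<nu>)) * (\<Sum>t = 1..m. (real t)^2 * ?P t)"
  have mp: "real m * (real m + 1) > 0" using m by simp
  have z: "zeta H \<nu> \<eta> m \<delta> xbin (xbin 1) (xbin (m+1)) z = - (2 / (real m * (real m + 1)) * S)"
    unfolding zeta_def S_def by (simp add: algebra_simps)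
  have "?E (m+1) \<le> 2 / (real m * (real m + 1)) * S"
    using T mp unfolding S_def[symmetric] by (simp add: field_simps)
  then show ?thesis unfolding z by simp
qed


lemma line_deriv:
  fixes F :: "real^'n \<Rightarrow> real"
  assumes "(F has_derivative (\<lambda>v. G \<bullet> v)) (at (a + s *\<^sub>R u))"
  shows "((\<lambda>s. F (a + s *\<^sub>R u)) has_field_derivative (G \<bullet> u)) (at s)"
proof -
  have l: "((\<lambda>s. a + s *\<^sub>R u) has_derivative (\<lambda>s. s *\<^sub>R u)) (at s)"
    by (auto intro!: derivative_eq_intros)
  have "((\<lambda>s. F (a + s *\<^sub>R u)) has_derivative (\<lambda>s. G \<bullet> (s *\<^sub>R u))) (at s)"
    using has_derivative_compose[OF l assms] by simp
  then show ?thesis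
    by (rule has_derivative_imp_has_field_derivative) simp
qed

lemma tangent:
  fixes F :: "real^'n \<Rightarrow> real"
  assumes cv: "convex_on UNIV F" and d: "(F has_derivative (\<lambda>v. G \<bullet> v)) (at a)"
  shows "F a + G \<bullet> (w - a) \<le> F w"
proof -
  let ?u = "w - a"
  let ?phi = "\<lambda>s. F (a + s *\<^sub>R ?u)"
  have cphi: "convex_on UNIV ?phi"
  proof (rule convex_onI)
    fix t x y :: real assume t: "t > 0" "t < 1"
    have e: "a + ((1 - t) *\<^sub>R x + t *\<^sub>R y) *\<^sub>R ?u = (1 - t) *\<^sub>R (a + x *\<^sub>R ?u) + t *\<^sub>R (a + y *\<^sub>R ?u)"
      by (simp add: algebra_simps)
    show "?phi ((1 - t) *\<^sub>R x + t *\<^sub>R y) \<le> (1 - t) * ?phi x + t * ?phi y"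
      unfolding e using convex_onD[OF cv, of t] t by auto
  qed simp
  have "(?phi has_field_derivative (G \<bullet> ?u)) (at 0 within UNIV)"
    using line_deriv[of F G a 0 ?u] d by simp
  then have "?phi 1 - ?phi 0 \<ge> (G \<bullet> ?u) * (1 - 0)"
    by (intro convex_on_imp_above_tangent[OF cphi]) auto
  then show ?thesis by simp
qed


lemma descent:
  fixes F :: "real^'n \<Rightarrow> real" and GF :: "real^'n \<Rightarrow> real^'n"
  assumes cX: "convex X" and a: "a \<in> X" and b: "b \<in> X" and H: "pd_mat H" and nu: "\<nu> \<ge> 0"
    and d: "\<forall>z\<in>X. (F has_derivative (\<lambda>v. GF z \<bullet> v)) (at z)"
    and lip: "\<forall>z1\<in>X. \<forall>z2\<in>X. \<forall>u. (GF z1 - GF z2) \<bullet> u \<le> \<nu> * sqrt (qn H (z1 - z2)) * sqrt (qn H u)"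
  shows "F b \<le> F a + GF a \<bullet> (b - a) + \<nu> / 2 * qn H (b - a)"
proof -
  let ?u = "b - a"
  let ?Q = "qn H ?u"
  have Q0: "?Q \<ge> 0" using H unfolding pd_mat_def by (metis order.order_iff_strict qn_def inner_zero_left)
  let ?phi = "\<lambda>s. F (a + s *\<^sub>R ?u) - s * (GF a \<bullet> ?u) - \<nu> * s^2 / 2 * ?Q"
  have inX: "a + s *\<^sub>R ?u \<in> X" if "0 \<le> s" "s \<le> 1" for s
  proof -
    have "a + s *\<^sub>R ?u = (1 - s) *\<^sub>R a + s *\<^sub>R b" by (simp add: algebra_simps)
    then show ?thesis using convexD[OF cX a b, of "1-s" s] that by simp
  qed
  have "?phi 1 \<le> ?phi 0"
  proof (rule DERIV_nonpos_imp_nonincreasing[of 0 1 ?phi])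
    fix s :: real assume s: "0 \<le> s" "s \<le> 1"
    have D1: "((\<lambda>s. F (a + s *\<^sub>R ?u)) has_field_derivative (GF (a + s *\<^sub>R ?u) \<bullet> ?u)) (at s)"
      by (rule line_deriv) (use d inX[OF s] in auto)
    have D: "(?phi has_field_derivative (GF (a + s *\<^sub>R ?u) \<bullet> ?u - GF a \<bullet> ?u - \<nu> * s * ?Q)) (at s)"
      using D1 by (auto intro!: derivative_eq_intros simp: power2_eq_square)
    have "(GF (a + s *\<^sub>R ?u) - GF a) \<bullet> ?u \<le> \<nu> * sqrt (qn H (a + s *\<^sub>R ?u - a)) * sqrt ?Q"
      using lip inX[OF s] a by blast
    also have "sqrt (qn H (a + s *\<^sub>R ?u - a)) = s * sqrt ?Q"
      using s by (simp add: qn_scale real_sqrt_mult)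
    also have "\<nu> * (s * sqrt ?Q) * sqrt ?Q = \<nu> * s * ?Q"
      using Q0 by (simp add: mult.assoc)
    finally have "GF (a + s *\<^sub>R ?u) \<bullet> ?u - GF a \<bullet> ?u - \<nu> * s * ?Q \<le> 0"
      by (simp add: inner_diff_left)
    then show "\<exists>y. (?phi has_real_derivative y) (at s) \<and> y \<le> 0" using D by blast
  qed simp
  then show ?thesis by (simp add: algebra_simps)
qed


lemma small_eps:
  fixes K C :: real
  assumes "\<forall>e. 0 < e \<and> e \<le> 1 \<longrightarrow> 0 \<le> e * K + e^2 * C"
  shows "0 \<le> K"
proof (rule ccontr)
  assume K: "\<not> 0 \<le> K"
  show False
  proof (cases "C \<le> 0")
    case True
    then show ?thesis using assms[rule_format, of 1] K by simp
  next
    case False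
    define e where "e = min 1 (- K / (2 * C))"
    have Kp: "- K / (2 * C) > 0" using K False by (intro divide_pos_pos) auto
    have e: "0 < e" "e \<le> 1" using Kp by (auto simp: e_def)
    have "e \<le> - K / (2 * C)" by (simp add: e_def)
    then have "e * C \<le> - K / 2" using False by (simp add: field_simps)
    then have "K + e * C < 0" using K by linarith
    then have "e * (K + e * C) < 0" using e by (simp add: mult_pos_neg)
    then show False using assms[rule_format, of e] e by (simp add: power2_eq_square algebra_simps)
  qed
qed

lemma x_vi:
  fixes q z p xo dh :: "real^'n"
  assumes cX: "convex X" and q: "q \<in> X" and z: "z \<in> X" and sH: "sym_mat H" and sM: "sym_mat M"
    and min: "\<forall>w\<in>X. dh \<bullet> q + \<gamma> / 2 * qn H (q - p) + 1 / 2 * qn M (q - xo)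
                \<le> dh \<bullet> w + \<gamma> / 2 * qn H (w - p) + 1 / 2 * qn M (w - xo)"
  shows "0 \<le> (dh + \<gamma> *\<^sub>R (H *v (q - p)) + M *v (q - xo)) \<bullet> (z - q)"
proof -
  let ?u = "z - q"
  let ?K = "(dh + \<gamma> *\<^sub>R (H *v (q - p)) + M *v (q - xo)) \<bullet> ?u"
  let ?C = "\<gamma> / 2 * qn H ?u + 1 / 2 * qn M ?u"
  have "0 \<le> e * ?K + e^2 * ?C" if e: "0 < e" "e \<le> 1" for e
  proof -
    have w: "q + e *\<^sub>R ?u \<in> X"
    proof -
      have "q + e *\<^sub>R ?u = (1 - e) *\<^sub>R q + e *\<^sub>R z" by (simp add: algebra_simps)
      then show ?thesis using convexD[OF cX q z, of "1-e" e] e by simp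
    qed
    have e1: "qn H (q + e *\<^sub>R ?u - p) = qn H (q - p) + 2 * e * ((q - p) \<bullet> (H *v ?u)) + e^2 * qn H ?u"
    proof -
      have eqn: "q + e *\<^sub>R ?u - p = (q - p) + e *\<^sub>R ?u" by simp
      show ?thesis unfolding eqn using qn_add[OF sH, of "q - p" "e *\<^sub>R ?u"] qn_scale[of H e ?u]
        by (simp add: matrix_vector_mult_scaleR)
    qed
    have e2: "qn M (q + e *\<^sub>R ?u - xo) = qn M (q - xo) + 2 * e * ((q - xo) \<bullet> (M *v ?u)) + e^2 * qn M ?u"
    proof -
      have eqn: "q + e *\<^sub>R ?u - xo = (q - xo) + e *\<^sub>R ?u" by simp
      show ?thesis unfolding eqn using qn_add[OF sM, of "q - xo" "e *\<^sub>R ?u"] qn_scale[of M e ?u]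
        by (simp add: matrix_vector_mult_scaleR)
    qed
    have s1: "(H *v (q - p)) \<bullet> ?u = (q - p) \<bullet> (H *v ?u)" using sym_inner[OF sH, of ?u "q - p"] by (simp add: inner_commute)
    have s2: "(M *v (q - xo)) \<bullet> ?u = (q - xo) \<bullet> (M *v ?u)" using sym_inner[OF sM, of ?u "q - xo"] by (simp add: inner_commute)
    have "0 \<le> (dh \<bullet> (q + e *\<^sub>R ?u) + \<gamma> / 2 * qn H (q + e *\<^sub>R ?u - p) + 1 / 2 * qn M (q + e *\<^sub>R ?u - xo))
        - (dh \<bullet> q + \<gamma> / 2 * qn H (q - p) + 1 / 2 * qn M (q - xo))"
      using min w by auto
    also have "\<dots> = e * ?K + e^2 * ?C"
    proof -
      have Kf: "?K = dh \<bullet> ?u + \<gamma> * ((q - p) \<bullet> (H *v ?u)) + (q - xo) \<bullet> (M *v ?u)"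
        by (simp only: inner_add_left s1 s2 inner_scaleR_left)
      show ?thesis unfolding e1 e2 Kf by (simp add: inner_add_right algebra_simps)
    qed
    finally show ?thesis .
  qed
  then show ?thesis by (intro small_eps) auto
qed


lemma y_vi:
  fixes yp yy y0 :: "real^'b" and x1 :: "real^'a" and lh b :: "real^'c"
  assumes cY: "convex Y" and yp: "yp \<in> Y" and yy: "yy \<in> Y" and sL: "sym_mat L"
    and gc: "convex_ereal_on Y g" and gninf: "\<forall>z\<in>Y. g z \<noteq> -\<infinity>"
    and g1: "g yp = ereal r1" and g0: "g yy = ereal r0"
    and min: "\<forall>z\<in>Y. aug_lag f g A B b \<beta> x1 yp lh + ereal (1 / 2 * qn L (yp - y0))
                \<le> aug_lag f g A B b \<beta> x1 z lh + ereal (1 / 2 * qn L (z - y0))"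
  shows "0 \<le> r0 - r1 - lh \<bullet> (B *v (yy - yp)) + \<beta> * ((A *v x1 + B *v yp - b) \<bullet> (B *v (yy - yp)))
             + (yy - yp) \<bullet> (L *v (yp - y0))"
proof -
  let ?u = "yy - yp"
  let ?r = "A *v x1 + B *v yp - b"
  let ?K = "r0 - r1 - lh \<bullet> (B *v ?u) + \<beta> * (?r \<bullet> (B *v ?u)) + ?u \<bullet> (L *v (yp - y0))"
  let ?C = "\<beta> / 2 * ((B *v ?u) \<bullet> (B *v ?u)) + 1 / 2 * qn L ?u"
  have "0 \<le> e * ?K + e^2 * ?C" if e: "0 < e" "e \<le> 1" for e
  proof -
    define w where "w = yp + e *\<^sub>R ?u"
    have wc: "w = (1 - e) *\<^sub>R yp + e *\<^sub>R yy" by (simp add: w_def algebra_simps)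
    have w: "w \<in> Y" using convexD[OF cY yp yy, of "1-e" e] e wc by simp
    have "g w \<le> ereal (1 - e) * g yp + ereal e * g yy"
      using gc yp yy e unfolding convex_ereal_on_def wc by auto
    also have "\<dots> = ereal ((1 - e) * r1 + e * r0)" by (simp add: g1 g0)
    finally have gw: "g w \<le> ereal ((1 - e) * r1 + e * r0)" .
    obtain rw where rw: "g w = ereal rw" using gw gninf w
      by (cases "g w") auto
    have rwle: "rw \<le> (1 - e) * r1 + e * r0" using gw rw by simp
    have m: "aug_lag f g A B b \<beta> x1 yp lh + ereal (1 / 2 * qn L (yp - y0))
                \<le> aug_lag f g A B b \<beta> x1 w lh + ereal (1 / 2 * qn L (w - y0))"
      using min w by blast
    have mr: "r1 - lh \<bullet> ?r + \<beta> / 2 * (norm ?r)^2 + 1 / 2 * qn L (yp - y0)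
        \<le> rw - lh \<bullet> (A *v x1 + B *v w - b) + \<beta> / 2 * (norm (A *v x1 + B *v w - b))^2 + 1 / 2 * qn L (w - y0)"
      using m unfolding aug_lag_def g1 rw by simp
    have ew: "A *v x1 + B *v w - b = ?r + e *\<^sub>R (B *v ?u)"
      by (simp add: w_def matrix_vector_right_distrib matrix_vector_mult_scaleR algebra_simps)
    have n1: "(norm (A *v x1 + B *v w - b))^2 = (norm ?r)^2 + 2 * e * (?r \<bullet> (B *v ?u)) + e^2 * ((B *v ?u) \<bullet> (B *v ?u))"
      unfolding ew power2_norm_eq_inner by (simp add: inner_add_left inner_add_right inner_commute algebra_simps power2_eq_square)
    have eqn: "w - y0 = (yp - y0) + e *\<^sub>R ?u" by (simp add: w_def)
    have n2: "qn L (w - y0) = qn L (yp - y0) + 2 * e * (?u \<bullet> (L *v (yp - y0))) + e^2 * qn L ?u"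
      unfolding eqn using qn_add[OF sL, of "yp - y0" "e *\<^sub>R ?u"] qn_scale[of L e ?u] sym_inner[OF sL, of "yp - y0" ?u]
      by (simp add: matrix_vector_mult_scaleR)
    have n3: "lh \<bullet> (A *v x1 + B *v w - b) = lh \<bullet> ?r + e * (lh \<bullet> (B *v ?u))"
      unfolding ew by (simp add: inner_add_right)
    have "0 \<le> (rw - r1) + (e * (- (lh \<bullet> (B *v ?u))) + \<beta> / 2 * (2 * e * (?r \<bullet> (B *v ?u)) + e^2 * ((B *v ?u) \<bullet> (B *v ?u))))
           + 1 / 2 * (2 * e * (?u \<bullet> (L *v (yp - y0))) + e^2 * qn L ?u)"
      using mr unfolding n1 n2 n3 by (simp add: algebra_simps)
    also have "\<dots> \<le> e * ?K + e^2 * ?C"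
      using rwle by (simp add: algebra_simps)
    finally show ?thesis .
  qed
  then show ?thesis by (intro small_eps) auto
qed


lemma final_alg:
  fixes xx x1 xk :: "real^'a" and yy y1 yk :: "real^'b" and ll lam lt lamh b :: "real^'c"
    and A :: "real^'a^'c" and B :: "real^'b^'c" and M D :: "real^'a^'a" and L :: "real^'b^'b" and h :: "real^'a"
  assumes beta: "\<beta> > 0"
    and hd: "h = - (transpose A *v (lam - \<beta> *\<^sub>R (A *v xk + B *v yk - b)))"
    and ltd: "lt = lam - \<beta> *\<^sub>R (A *v x1 + B *v yk - b)"
    and lamhd: "lamh = lam - (\<tau> * \<beta>) *\<^sub>R (A *v x1 + B *v yk - b)"
    and Dd: "D = M - \<beta> *\<^sub>R (transpose A ** A)"
    and Xp: "Z \<le> - (F1 - F0 + h \<bullet> (x1 - xx) + (x1 - xx) \<bullet> (M *v (x1 - xk)))"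
    and Yp: "0 \<le> r0 - r1 - lamh \<bullet> (B *v (yy - y1)) + \<beta> * ((A *v x1 + B *v y1 - b) \<bullet> (B *v (yy - y1)))
             + (yy - y1) \<bullet> (L *v (y1 - yk))"
  shows "(xx - x1) \<bullet> (D *v (xk - x1))
               + (yy - y1) \<bullet> ((L + \<beta> *\<^sub>R (transpose B ** B)) *v (yk - y1)
                                     - \<tau> *\<^sub>R (transpose B *v (lam - lt)))
               + (ll - lt) \<bullet> (- (B *v (yk - y1)) + (1 / \<beta>) *\<^sub>R (lam - lt))
               + Z
    \<le> F0 + r0 - (F1 + r1) + ((xx - x1) \<bullet> (- (transpose A *v ll))
               + (yy - y1) \<bullet> (- (transpose B *v ll))
               + (ll - lt) \<bullet> (A *v xx + B *v yy - b))"
proof -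
  have t1: "\<And>u v. (u::real^'a) \<bullet> (transpose A *v v) = (A *v u) \<bullet> v"
    using inner_mat_transpose[of _ "transpose A"] by (simp del: transpose_matrix_vector)
  have t2: "\<And>u v. (u::real^'b) \<bullet> (transpose B *v v) = (B *v u) \<bullet> v"
    using inner_mat_transpose[of _ "transpose B"] by (simp del: transpose_matrix_vector)
  have m1: "\<And>u. (transpose A ** A) *v u = transpose A *v (A *v u)" by (simp add: matrix_vector_mul_assoc del: transpose_matrix_vector)
  have m2: "\<And>u. (transpose B ** B) *v u = transpose B *v (B *v u)" by (simp add: matrix_vector_mul_assoc del: transpose_matrix_vector)
  have sc: "\<And>(c::real) (N::real^'a^'a) u. (c *\<^sub>R N) *v u = c *\<^sub>R (N *v u)"
    by (simp add: scaleR_matrix_vector_assoc)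
  have sc2: "\<And>(c::real) (N::real^'b^'b) u. (c *\<^sub>R N) *v u = c *\<^sub>R (N *v u)"
    by (simp add: scaleR_matrix_vector_assoc)
  have lam_lt: "lam - lt = \<beta> *\<^sub>R (A *v x1 + B *v yk - b)" by (simp add: ltd)
  have hw: "\<And>w. h \<bullet> w = - ((A *v w) \<bullet> (lam - \<beta> *\<^sub>R (A *v xk + B *v yk - b)))"
    unfolding hd by (simp add: inner_commute t1 del: transpose_matrix_vector)
  show ?thesis
    using Xp Yp beta unfolding Dd hw lamhd lam_lt ltd
    by (simp add: algebra_simps inner_add_left inner_add_right inner_diff_left inner_diff_right
        matrix_vector_mult_add_rdistrib matrix_vector_mult_diff_rdistrib t1 t2 m1 m2 sc sc2 mv_neg inner_commute del: transpose_matrix_vector)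
qed


theorem theorem2p2:
  fixes X :: "(real^'a) set" and Y :: "(real^'b) set"
    and A :: "real^'a^'c" and B :: "real^'b^'c" and b :: "real^'c"
    and g :: "real^'b \<Rightarrow> ereal"
    and N :: nat and fs :: "nat \<Rightarrow> real^'a \<Rightarrow> real" and gfs :: "nat \<Rightarrow> real^'a \<Rightarrow> real^'a"
    and f :: "real^'a \<Rightarrow> real" and gf :: "real^'a \<Rightarrow> real^'a"
    and H :: "real^'a^'a" and \<nu> :: real
    and \<beta> :: real and L :: "real^'b^'b" and \<tau> s :: real
    and m :: "nat \<Rightarrow> nat" and \<eta> :: "nat \<Rightarrow> real" and M :: "nat \<Rightarrow> real^'a^'a"
    and x xb :: "nat \<Rightarrow> real^'a" and y :: "nat \<Rightarrow> real^'b" and lam lamh :: "nat \<Rightarrow> real^'c"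
    and h :: "nat \<Rightarrow> real^'a"
    and xin xbin xhat d e :: "nat \<Rightarrow> nat \<Rightarrow> real^'a" and \<xi> :: "nat \<Rightarrow> nat \<Rightarrow> nat"
    and k :: nat and xx :: "real^'a" and yy :: "real^'b" and ll :: "real^'c"
  assumes X_nonempty: "X \<noteq> {}" and X_closed: "closed X" and X_convex: "convex X"
    and Y_nonempty: "Y \<noteq> {}" and Y_closed: "closed Y" and Y_convex: "convex Y"
    and g_proper_convex: "proper_convex_on Y g"
    and N_pos: "N \<ge> 1"
    and f_def: "f = (\<lambda>z. (1 / real N) * (\<Sum>j = 1..N. fs j z))"
    and fs_convex: "\<forall>j\<in>{1..N}. convex_on UNIV (fs j)"
    and fs_C1: "\<exists>U. open U \<and> X \<subseteq> U \<and>
        (\<forall>j\<in>{1..N}. (\<forall>z\<in>U. (fs j has_derivative (\<lambda>v. gfs j z \<bullet> v)) (at z))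
                       \<and> continuous_on U (gfs j))"
    and gf_def: "gf = (\<lambda>z. (1 / real N) *\<^sub>R (\<Sum>j = 1..N. gfs j z))"
    and H_pd: "pd_mat H" and nu_pos: "\<nu> > 0"
    and lipschitz: "\<forall>j\<in>{1..N}. \<forall>z1\<in>X. \<forall>z2\<in>X.
        sqrt (qn (matrix_inv H) (gfs j z1 - gfs j z2)) \<le> \<nu> * sqrt (qn H (z1 - z2))"
    and beta_pos: "\<beta> > 0" and L_psd: "psd_mat L"
    and tau_s: "(\<tau>, s) \<in> Delta_region"
    \<comment> \<open>start\<close>
    and x0: "x 0 \<in> X" and y0: "y 0 \<in> Y" and xb0: "xb 0 = x 0"
    \<comment> \<open>parameter choices at every outer iteration\<close>
    and m_pos: "\<forall>i. m i \<ge> 1" and eta_pos: "\<forall>i. \<eta> i > 0"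
    and M_sym: "\<forall>i. sym_mat (M i)"
    and D_psd: "\<forall>i. psd_mat (M i - \<beta> *\<^sub>R (transpose A ** A))"
    and h_def: "\<forall>i. h i = - (transpose A *v (lam i - \<beta> *\<^sub>R (A *v x i + B *v y i - b)))"
    \<comment> \<open>subroutine xsub at outer iteration i\<close>
    and xin1: "\<forall>i. xin i 1 = x i" and xbin1: "\<forall>i. xbin i 1 = xb i"
    and xi_range: "\<forall>i. \<forall>t\<in>{1..m i}. \<xi> i t \<in> {1..N}"
    and xhat_def: "\<forall>i. \<forall>t\<in>{1..m i}.
        xhat i t = (2 / (real t + 1)) *\<^sub>R xbin i t + (1 - 2 / (real t + 1)) *\<^sub>R xin i t"
    and d_def: "\<forall>i. \<forall>t\<in>{1..m i}. d i t = gfs (\<xi> i t) (xhat i t) + e i t"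
    and xbin_step: "\<forall>i. \<forall>t\<in>{1..m i}. xbin i (t + 1) \<in> X \<and>
        (\<forall>z\<in>X. (d i t + h i) \<bullet> xbin i (t + 1)
                  + (2 / (real t * \<eta> i)) / 2 * qn H (xbin i (t + 1) - xbin i t)
                  + 1 / 2 * qn (M i) (xbin i (t + 1) - x i)
                \<le> (d i t + h i) \<bullet> z
                  + (2 / (real t * \<eta> i)) / 2 * qn H (z - xbin i t)
                  + 1 / 2 * qn (M i) (z - x i))"
    and xin_step: "\<forall>i. \<forall>t\<in>{1..m i}.
        xin i (t + 1) = (2 / (real t + 1)) *\<^sub>R xbin i (t + 1) + (1 - 2 / (real t + 1)) *\<^sub>R xin i t"
    and x_out: "\<forall>i. x (Suc i) = xin i (m i + 1)" and xb_out: "\<forall>i. xb (Suc i) = xbin i (m i + 1)"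
    \<comment> \<open>multiplier and y updates\<close>
    and lamh_def: "\<forall>i. lamh i = lam i - (\<tau> * \<beta>) *\<^sub>R (A *v x (Suc i) + B *v y i - b)"
    and y_step: "\<forall>i. y (Suc i) \<in> Y \<and>
        (\<forall>z\<in>Y. aug_lag f g A B b \<beta> (x (Suc i)) (y (Suc i)) (lamh i)
                  + ereal (1 / 2 * qn L (y (Suc i) - y i))
                \<le> aug_lag f g A B b \<beta> (x (Suc i)) z (lamh i) + ereal (1 / 2 * qn L (z - y i)))"
    and lam_step: "\<forall>i. lam (Suc i) = lamh i - (s * \<beta>) *\<^sub>R (A *v x (Suc i) + B *v y (Suc i) - b)"
    \<comment> \<open>the fixed outer index and the test point\<close>
    and eta_k: "\<eta> k < 1 / \<nu>"
    and xx_in: "xx \<in> X" and yy_in: "yy \<in> Y"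
  shows
    "let lt = lam k - \<beta> *\<^sub>R (A *v x (Suc k) + B *v y k - b);
         D = M k - \<beta> *\<^sub>R (transpose A ** A);
         \<delta> = (\<lambda>t. gf (xhat k t) - d k t)
     in ereal (f xx) + g yy - (ereal (f (x (Suc k))) + g (y (Suc k)))
        + ereal ((xx - x (Suc k)) \<bullet> (- (transpose A *v ll))
               + (yy - y (Suc k)) \<bullet> (- (transpose B *v ll))
               + (ll - lt) \<bullet> (A *v xx + B *v yy - b))
      \<ge> ereal ((xx - x (Suc k)) \<bullet> (D *v (x k - x (Suc k)))
               + (yy - y (Suc k)) \<bullet> ((L + \<beta> *\<^sub>R (transpose B ** B)) *v (y k - y (Suc k))
                                     - \<tau> *\<^sub>R (transpose B *v (lam k - lt)))
               + (ll - lt) \<bullet> (- (B *v (y k - y (Suc k))) + (1 / \<beta>) *\<^sub>R (lam k - lt))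
               + zeta H \<nu> (\<eta> k) (m k) \<delta> (xbin k) (xb k) (xb (Suc k)) xx)"
proof -
  have sH: "sym_mat H" using H_pd pd_mat_def by blast
  have en: "\<eta> k * \<nu> < 1" using eta_k nu_pos by (simp add: field_simps)
  have etak: "\<eta> k > 0" using eta_pos by blast
  have Hnn: "\<And>u. 0 \<le> qn H u" using H_pd unfolding pd_mat_def by (metis order.order_iff_strict qn_def inner_zero_left)
  have inner_mem: "\<And>i. x i \<in> X \<Longrightarrow> xb i \<in> X \<Longrightarrow> \<forall>t. 1 \<le> t \<longrightarrow> t \<le> m i + 1 \<longrightarrow> xin i t \<in> X \<and> xbin i t \<in> X"
  proof -
    fix i assume xi: "x i \<in> X" "xb i \<in> X"
    show "\<forall>t. 1 \<le> t \<longrightarrow> t \<le> m i + 1 \<longrightarrow> xin i t \<in> X \<and> xbin i t \<in> X"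
    proof
      fix t show "1 \<le> t \<longrightarrow> t \<le> m i + 1 \<longrightarrow> xin i t \<in> X \<and> xbin i t \<in> X"
      proof (induction t)
        case 0 show ?case by simp
      next
        case (Suc t)
        show ?case
        proof (cases "t = 0")
          case True then show ?thesis using xin1 xbin1 xi by simp
        next
          case False
          show ?thesis
          proof (intro impI)
            assume le: "Suc t \<le> m i + 1"
            have tt: "t \<in> {1..m i}" using False le by auto
            have ih: "xin i t \<in> X" using Suc.IH False le by auto
            have xb1: "xbin i (t+1) \<in> X" using xbin_step tt by blast
            have c1: "0 \<le> 2 / (real t + 1)" "0 \<le> 1 - 2 / (real t + 1)" using False by (auto simp: field_simps)
            have "xin i (t+1) \<in> X"
              using xin_step tt convexD[OF X_convex xb1 ih c1] by auto
            then show "xin i (Suc t) \<in> X \<and> xbin i (Suc t) \<in> X" using xb1 by simp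
          qed
        qed
      qed
    qed
  qed
  have outer: "\<forall>i. x i \<in> X \<and> xb i \<in> X"
  proof
    fix i show "x i \<in> X \<and> xb i \<in> X"
    proof (induction i)
      case 0 then show ?case using x0 xb0 by simp
    next
      case (Suc i)
      then have "xin i (m i + 1) \<in> X \<and> xbin i (m i + 1) \<in> X" using inner_mem[of i] by auto
      then show ?case using x_out xb_out by simp
    qed
  qed
  have memk: "\<forall>t. 1 \<le> t \<longrightarrow> t \<le> m k + 1 \<longrightarrow> xin k t \<in> X \<and> xbin k t \<in> X"
    using inner_mem outer by blast
  obtain U where U: "open U" "X \<subseteq> U"
    and dU: "\<forall>j\<in>{1..N}. \<forall>z\<in>U. (fs j has_derivative (\<lambda>v. gfs j z \<bullet> v)) (at z)"
    using fs_C1 by blast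
  have gfi: "\<And>z v. gf z \<bullet> v = (1 / real N) * (\<Sum>j = 1..N. gfs j z \<bullet> v)"
    by (simp add: gf_def inner_sum_left)
  have fd: "\<forall>z\<in>X. (f has_derivative (\<lambda>v. gf z \<bullet> v)) (at z)"
  proof
    fix z assume z: "z \<in> X"
    have "((\<lambda>z. \<Sum>j = 1..N. fs j z) has_derivative (\<lambda>v. \<Sum>j = 1..N. gfs j z \<bullet> v)) (at z)"
      using dU z U(2) by (intro has_derivative_sum) auto
    then have "((\<lambda>z. (1 / real N) * (\<Sum>j = 1..N. fs j z)) has_derivative (\<lambda>v. (1 / real N) * (\<Sum>j = 1..N. gfs j z \<bullet> v))) (at z)"
      by (rule has_derivative_mult_right)
    then show "(f has_derivative (\<lambda>v. gf z \<bullet> v)) (at z)"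
      unfolding f_def gfi .
  qed
  have ftan: "\<forall>a\<in>X. \<forall>w. f a + gf a \<bullet> (w - a) \<le> f w"
  proof (intro ballI allI)
    fix a w assume a: "a \<in> X"
    have "\<forall>j\<in>{1..N}. fs j a + gfs j a \<bullet> (w - a) \<le> fs j w"
      using tangent fs_convex dU a U(2) by blast
    then have "(\<Sum>j = 1..N. fs j a + gfs j a \<bullet> (w - a)) \<le> (\<Sum>j = 1..N. fs j w)"
      by (intro sum_mono) auto
    then have "(1 / real N) * (\<Sum>j = 1..N. fs j a + gfs j a \<bullet> (w - a)) \<le> (1 / real N) * (\<Sum>j = 1..N. fs j w)"
      by (intro mult_left_mono) auto
    then show "f a + gf a \<bullet> (w - a) \<le> f w"
      unfolding f_def gfi by (simp add: sum.distrib distrib_left)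
  qed
  have lip: "\<forall>z1\<in>X. \<forall>z2\<in>X. \<forall>u. (gf z1 - gf z2) \<bullet> u \<le> \<nu> * sqrt (qn H (z1 - z2)) * sqrt (qn H u)"
  proof (intro ballI allI)
    fix z1 z2 u assume z: "z1 \<in> X" "z2 \<in> X"
    have "\<forall>j\<in>{1..N}. (gfs j z1 - gfs j z2) \<bullet> u \<le> \<nu> * sqrt (qn H (z1 - z2)) * sqrt (qn H u)"
    proof
      fix j assume j: "j \<in> {1..N}"
      have "(gfs j z1 - gfs j z2) \<bullet> u \<le> sqrt (qn (matrix_inv H) (gfs j z1 - gfs j z2)) * sqrt (qn H u)"
        by (rule cs_H[OF H_pd])
      also have "\<dots> \<le> \<nu> * sqrt (qn H (z1 - z2)) * sqrt (qn H u)"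
        using lipschitz j z Hnn by (intro mult_right_mono) auto
      finally show "(gfs j z1 - gfs j z2) \<bullet> u \<le> \<nu> * sqrt (qn H (z1 - z2)) * sqrt (qn H u)" .
    qed
    then have "(\<Sum>j = 1..N. (gfs j z1 - gfs j z2) \<bullet> u) \<le> (\<Sum>j = 1..N. \<nu> * sqrt (qn H (z1 - z2)) * sqrt (qn H u))"
      by (intro sum_mono) auto
    also have "\<dots> = real N * (\<nu> * sqrt (qn H (z1 - z2)) * sqrt (qn H u))" by simp
    finally have "(1 / real N) * (\<Sum>j = 1..N. (gfs j z1 - gfs j z2) \<bullet> u) \<le> \<nu> * sqrt (qn H (z1 - z2)) * sqrt (qn H u)"
      using N_pos by (simp add: field_simps)
    moreover have "(gf z1 - gf z2) \<bullet> u = (1 / real N) * (\<Sum>j = 1..N. (gfs j z1 - gfs j z2) \<bullet> u)"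
      by (simp add: inner_diff_left gfi sum_subtractf right_diff_distrib)
    ultimately show "(gf z1 - gf z2) \<bullet> u \<le> \<nu> * sqrt (qn H (z1 - z2)) * sqrt (qn H u)" by simp
  qed
  have Mpsd: "\<forall>v. 0 \<le> qn (M k) v"
  proof
    fix v
    have "0 \<le> qn (M k - \<beta> *\<^sub>R (transpose A ** A)) v" using D_psd psd_mat_def by blast
    also have "qn (M k - \<beta> *\<^sub>R (transpose A ** A)) v = qn (M k) v - \<beta> * ((A *v v) \<bullet> (A *v v))"
      unfolding qn_def
      by (simp add: matrix_vector_mult_diff_rdistrib inner_diff_right scaleR_matrix_vector_assoc[symmetric]
          matrix_vector_mul_assoc[symmetric] inner_mat_transpose del: transpose_matrix_vector)
    moreover have "0 \<le> \<beta> * ((A *v v) \<bullet> (A *v v))" using beta_pos by simp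
    ultimately show "0 \<le> qn (M k) v" by linarith
  qed
  have sMk: "sym_mat (M k)" using M_sym by blast
  have step: "\<forall>t\<in>{1..m k}. Ef f (h k) (M k) (x k) xx (xin k (t+1)) \<le> (1 - 2 / (real t + 1)) * Ef f (h k) (M k) (x k) xx (xin k t)
        + 2 / (real t + 1) * ((gf (xhat k t) - d k t) \<bullet> (xbin k t - xx) + (2 / (real t * \<eta> k)) / 2 * (qn H (xx - xbin k t) - qn H (xx - xbin k (t+1)))
           + qn (matrix_inv H) (gf (xhat k t) - d k t) / (2 * (2 / (real t * \<eta> k) - \<nu> * (2 / (real t + 1)))))"
  proof
    fix t assume t: "t \<in> {1..m k}"
    have t1: "t \<ge> 1" using t by auto
    have mem: "xin k t \<in> X" "xbin k t \<in> X" "xin k (t+1) \<in> X" "xbin k (t+1) \<in> X"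
      using memk t by auto
    have bb: "0 < 2 / (real t + 1)" "2 / (real t + 1) \<le> 1" using t1 by (auto simp: field_simps)
    have xh: "xhat k t = (2 / (real t + 1)) *\<^sub>R xbin k t + (1 - 2 / (real t + 1)) *\<^sub>R xin k t"
      using xhat_def t by blast
    have a1: "xin k (t+1) = (2 / (real t + 1)) *\<^sub>R xbin k (t+1) + (1 - 2 / (real t + 1)) *\<^sub>R xin k t"
      using xin_step t by blast
    have xhX: "xhat k t \<in> X" unfolding xh using convexD[OF X_convex mem(2) mem(1)] bb by auto
    have desc: "f (xin k (t+1)) \<le> f (xhat k t) + gf (xhat k t) \<bullet> (xin k (t+1) - xhat k t) + \<nu> / 2 * qn H (xin k (t+1) - xhat k t)"
      by (rule descent[OF X_convex xhX mem(3) H_pd _ fd lip]) (use nu_pos in simp)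
    have cvx1: "f (xhat k t) + gf (xhat k t) \<bullet> (xin k t - xhat k t) \<le> f (xin k t)" using ftan xhX by blast
    have cvx2: "f (xhat k t) + gf (xhat k t) \<bullet> (xx - xhat k t) \<le> f xx" using ftan xhX by blast
    have minx: "\<forall>w\<in>X. (d k t + h k) \<bullet> xbin k (t+1) + (2 / (real t * \<eta> k)) / 2 * qn H (xbin k (t+1) - xbin k t) + 1 / 2 * qn (M k) (xbin k (t+1) - x k)
                \<le> (d k t + h k) \<bullet> w + (2 / (real t * \<eta> k)) / 2 * qn H (w - xbin k t) + 1 / 2 * qn (M k) (w - x k)"
      using xbin_step t by blast
    have vi: "0 \<le> (d k t + h k + (2 / (real t * \<eta> k)) *\<^sub>R (H *v (xbin k (t+1) - xbin k t)) + M k *v (xbin k (t+1) - x k)) \<bullet> (xx - xbin k (t+1))"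
      by (rule x_vi[OF X_convex mem(4) xx_in sH sMk minx])
    have gam: "2 / (real t * \<eta> k) - \<nu> * (2 / (real t + 1)) > 0"
      using coef_bound(1)[OF t1 etak nu_pos en] .
    show "Ef f (h k) (M k) (x k) xx (xin k (t+1)) \<le> (1 - 2 / (real t + 1)) * Ef f (h k) (M k) (x k) xx (xin k t)
        + 2 / (real t + 1) * ((gf (xhat k t) - d k t) \<bullet> (xbin k t - xx) + (2 / (real t * \<eta> k)) / 2 * (qn H (xx - xbin k t) - qn H (xx - xbin k (t+1)))
           + qn (matrix_inv H) (gf (xhat k t) - d k t) / (2 * (2 / (real t * \<eta> k) - \<nu> * (2 / (real t + 1)))))"
      by (rule one_step[OF H_pd sMk Mpsd bb gam xh a1 desc cvx1 cvx2 vi])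
  qed
  have Xb: "zeta H \<nu> (\<eta> k) (m k) (\<lambda>t. gf (xhat k t) - d k t) (xbin k) (xbin k 1) (xbin k (m k + 1)) xx
      \<le> - Ef f (h k) (M k) (x k) xx (xin k (m k + 1))"
    by (rule xsub_bound[OF H_pd etak nu_pos en _ step]) (use m_pos in blast)
  have Xp: "zeta H \<nu> (\<eta> k) (m k) (\<lambda>t. gf (xhat k t) - d k t) (xbin k) (xb k) (xb (Suc k)) xx
      \<le> - (f (x (Suc k)) - f xx + h k \<bullet> (x (Suc k) - xx) + (x (Suc k) - xx) \<bullet> (M k *v (x (Suc k) - x k)))"
    using Xb xbin1 xb_out x_out unfolding Ef_def by simp
  have y1Y: "y (Suc k) \<in> Y" using y_step by blast
  have gninf: "\<forall>z\<in>Y. g z \<noteq> -\<infinity>" using g_proper_convex proper_convex_on_def by blast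
  have gconv: "convex_ereal_on Y g" using g_proper_convex proper_convex_on_def by blast
  have sL: "sym_mat L" using L_psd psd_mat_def by blast
  have ymin: "\<forall>z\<in>Y. aug_lag f g A B b \<beta> (x (Suc k)) (y (Suc k)) (lamh k) + ereal (1 / 2 * qn L (y (Suc k) - y k))
                \<le> aug_lag f g A B b \<beta> (x (Suc k)) z (lamh k) + ereal (1 / 2 * qn L (z - y k))"
    using y_step by blast
  obtain z0 where z0: "z0 \<in> Y" "g z0 \<noteq> \<infinity>" using g_proper_convex proper_convex_on_def by blast
  obtain rz where rz: "g z0 = ereal rz" using z0 gninf by (cases "g z0") auto
  have "g (y (Suc k)) \<noteq> \<infinity>"
  proof
    assume inf: "g (y (Suc k)) = \<infinity>"
    have "aug_lag f g A B b \<beta> (x (Suc k)) (y (Suc k)) (lamh k) + ereal (1 / 2 * qn L (y (Suc k) - y k))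
                \<le> aug_lag f g A B b \<beta> (x (Suc k)) z0 (lamh k) + ereal (1 / 2 * qn L (z0 - y k))"
      using ymin z0 by blast
    then show False unfolding aug_lag_def inf rz by simp
  qed
  then obtain r1 where g1: "g (y (Suc k)) = ereal r1" using gninf y1Y by (cases "g (y (Suc k))") auto
  show ?thesis
  proof (cases "g yy")
    case (real r0)
    have Yp: "0 \<le> r0 - r1 - lamh k \<bullet> (B *v (yy - y (Suc k))) + \<beta> * ((A *v x (Suc k) + B *v y (Suc k) - b) \<bullet> (B *v (yy - y (Suc k))))
             + (yy - y (Suc k)) \<bullet> (L *v (y (Suc k) - y k))"
      by (rule y_vi[OF Y_convex y1Y yy_in sL gconv gninf g1 real ymin])
    have hk: "h k = - (transpose A *v (lam k - \<beta> *\<^sub>R (A *v x k + B *v y k - b)))" using h_def by blast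
    have lk: "lamh k = lam k - (\<tau> * \<beta>) *\<^sub>R (A *v x (Suc k) + B *v y k - b)" using lamh_def by blast
    note R = final_alg[OF beta_pos hk refl lk refl Xp Yp]
    show ?thesis unfolding Let_def g1 real using R by simp
  next
    case PInf
    then show ?thesis unfolding Let_def g1 by simp
  next
    case MInf
    then show ?thesis using gninf yy_in by blast
  qed
qed
end
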